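(* Let $p\in(1,\infty)$, $q=p/(p-1)$, $R_0\in\mathbb{R}^{\mathcal{S}\times\mathcal{A}}$, $\alpha>0$ and $\mathcal{R}_p=\{R:\|R-R_0\|_p\le\alpha\}$. For every stationary policy $\pi\in\Pi$ and every $(s,a)\in\mathcal{S}\times\mathcal{A}$, $$Q^\pi_{\mathcal{R}_p}(s,a)=R_0(s,a)+\gamma\sum_{s'}P(s'|s,a)\,v^\pi_{\mathcal{R}_p}(s')-\alpha\left(\frac{d^\pi(s,a)}{\|d^\pi\|_q}\right)^{q-1}.$$
   Context: Finite MDP with finite state space $\mathcal{S}$, finite action space $\mathcal{A}$, transition kernel $P$, discount $\gamma\in[0,1)$, initial distribution $\mu$ with $\mu(s)>0$ for all $s$. $\Pi$: stationary randomized policies, $\pi_s(a)=\pi(a|s)$; $R^\pi(s)=\sum_a\pi_s(a)R(s,a)$, $P^\pi(s'|s)=\sum_a\pi_s(a)P(s'|s,a)$; $v^\pi_R=(I-\gamma P^\pi)^{-1}R^\pi$ and $Q^\pi_R(s,a)=R(s,a)+\gamma\sum_{s'}P(s'|s,a)v^\pi_R(s')$. Occupancy: $d^\pi=\mu^\top(I-\gamma P^\pi)^{-1}$, $d^\pi(s,a)=d^\pi(s)\pi_s(a)$, $\|d^\pi\|_q$ the $L_q$ norm over $\mathcal{S}\times\mathcal{A}$. Return $\rho^\pi_R=\sum_{s,a}d^\pi(s,a)R(s,a)$. $R^\pi_p$ is the (unique) minimizer of $R\mapsto\rho^\pi_R$ over $\mathcal{R}_p$; $v^\pi_{\mathcal{R}_p}:=v^\pi_{R^\pi_p}$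 and $Q^\pi_{\mathcal{R}_p}:=Q^\pi_{R^\pi_p}$. *)

theory Defs
  imports "HOL-Analysis.Analysis"
begin

text \<open>Finite MDP: states 's, actions 'a (finite types). Transition kernel
  P s a s' = P(s'|s,a); policies pol s a = pol(a|s); rewards R s a.\<close>

definition stochastic_kernel :: "('s::finite \<Rightarrow> 'a::finite \<Rightarrow> 's \<Rightarrow> real) \<Rightarrow> bool" where
  "stochastic_kernel P \<longleftrightarrow> (\<forall>s a s'. P s a s' \<ge> 0) \<and> (\<forall>s a. (\<Sum>s'\<in>UNIV. P s a s') = 1)"

definition policy :: "('s::finite \<Rightarrow> 'a::finite \<Rightarrow> real) \<Rightarrow> bool" where
  "policy pol \<longleftrightarrow> (\<forall>s a. pol s a \<ge> 0) \<and> (\<forall>s. (\<Sum>a\<in>UNIV. pol s a) = 1)"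

definition Ppi :: "('s::finite \<Rightarrow> 'a::finite \<Rightarrow> 's \<Rightarrow> real) \<Rightarrow> ('s \<Rightarrow> 'a \<Rightarrow> real) \<Rightarrow> real^'s^'s" where
  "Ppi P pol = (\<chi> s s'. \<Sum>a\<in>UNIV. pol s a * P s a s')"

definition Rpi :: "('s::finite \<Rightarrow> 'a::finite \<Rightarrow> real) \<Rightarrow> ('s \<Rightarrow> 'a \<Rightarrow> real) \<Rightarrow> real^'s" where
  "Rpi R pol = (\<chi> s. \<Sum>a\<in>UNIV. pol s a * R s a)"

definition vfun :: "('s::finite \<Rightarrow> 'a::finite \<Rightarrow> 's \<Rightarrow> real) \<Rightarrow> real \<Rightarrow> ('s \<Rightarrow> 'a \<Rightarrow> real) \<Rightarrow> ('s \<Rightarrow> 'a \<Rightarrow> real) \<Rightarrow> real^'s" where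
  "vfun P \<gamma> pol R = matrix_inv (mat 1 - \<gamma> *\<^sub>R Ppi P pol) *v Rpi R pol"

definition Qfun :: "('s::finite \<Rightarrow> 'a::finite \<Rightarrow> 's \<Rightarrow> real) \<Rightarrow> real \<Rightarrow> ('s \<Rightarrow> 'a \<Rightarrow> real) \<Rightarrow> ('s \<Rightarrow> 'a \<Rightarrow> real) \<Rightarrow> 's \<Rightarrow> 'a \<Rightarrow> real" where
  "Qfun P \<gamma> pol R s a = R s a + \<gamma> * (\<Sum>s'\<in>UNIV. P s a s' * vfun P \<gamma> pol R $ s')"

definition dstate :: "('s::finite \<Rightarrow> 'a::finite \<Rightarrow> 's \<Rightarrow> real) \<Rightarrow> real \<Rightarrow> ('s \<Rightarrow> real) \<Rightarrow> ('s \<Rightarrow> 'a \<Rightarrow> real) \<Rightarrow> real^'s" where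
  "dstate P \<gamma> \<mu> pol = (\<chi> s. \<mu> s) v* matrix_inv (mat 1 - \<gamma> *\<^sub>R Ppi P pol)"

definition docc :: "('s::finite \<Rightarrow> 'a::finite \<Rightarrow> 's \<Rightarrow> real) \<Rightarrow> real \<Rightarrow> ('s \<Rightarrow> real) \<Rightarrow> ('s \<Rightarrow> 'a \<Rightarrow> real) \<Rightarrow> 's \<Rightarrow> 'a \<Rightarrow> real" where
  "docc P \<gamma> \<mu> pol s a = dstate P \<gamma> \<mu> pol $ s * pol s a"

definition lpnorm :: "real \<Rightarrow> ('s::finite \<Rightarrow> 'a::finite \<Rightarrow> real) \<Rightarrow> real" where
  "lpnorm p f = (\<Sum>(s,a)\<in>UNIV. \<bar>f s a\<bar> powr p) powr (1 / p)"

definition ret :: "('s::finite \<Rightarrow> 'a::finite \<Rightarrow> 's \<Rightarrow> real) \<Rightarrow> real \<Rightarrow> ('s \<Rightarrow> real) \<Rightarrow> ('s \<Rightarrow> 'a \<Rightarrow> real) \<Rightarrow> ('s \<Rightarrow> 'a \<Rightarrow> real) \<Rightarrow> real" where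
  "ret P \<gamma> \<mu> pol R = (\<Sum>(s,a)\<in>UNIV. docc P \<gamma> \<mu> pol s a * R s a)"

definition Rball :: "real \<Rightarrow> ('s::finite \<Rightarrow> 'a::finite \<Rightarrow> real) \<Rightarrow> real \<Rightarrow> ('s \<Rightarrow> 'a \<Rightarrow> real) set" where
  "Rball p R0 \<alpha> = {R. lpnorm p (\<lambda>s a. R s a - R0 s a) \<le> \<alpha>}"

definition Rworst :: "('s::finite \<Rightarrow> 'a::finite \<Rightarrow> 's \<Rightarrow> real) \<Rightarrow> real \<Rightarrow> ('s \<Rightarrow> real) \<Rightarrow> ('s \<Rightarrow> 'a \<Rightarrow> real) \<Rightarrow> real \<Rightarrow> ('s \<Rightarrow> 'a \<Rightarrow> real) \<Rightarrow> real \<Rightarrow> ('s \<Rightarrow> 'a \<Rightarrow> real)" where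
  "Rworst P \<gamma> \<mu> pol p R0 \<alpha> = (THE R. R \<in> Rball p R0 \<alpha> \<and> (\<forall>R'\<in>Rball p R0 \<alpha>. ret P \<gamma> \<mu> pol R \<le> ret P \<gamma> \<mu> pol R'))"

end

theory Submission imports Defs begin

lemma strict_pow_ineq:
  fixes r t :: real
  assumes r: "0 < r" "r < 1" and t: "0 < t" "t \<noteq> 1"
  shows "t powr r < r * t + (1 - r)"
proof -
  define h where "h = (\<lambda>x::real. x powr r - r * x)"
  have der: "DERIV h x :> r * x powr (r - 1) - r" if "0 < x" for x
    unfolding h_def using that
    by (auto intro!: derivative_eq_intros)
  have cont: "continuous_on {a..b} h" if "0 < a" for a b
    unfolding h_def using that by (intro continuous_intros) auto
  show ?thesis
  proof (cases "t < 1")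
    case True
    have "h t < h 1"
    proof (rule DERIV_pos_imp_increasing_open[OF True _ cont[OF t(1)]])
      fix x assume x: "t < x" "x < 1"
      have "x powr (r - 1) > 1" using x t r
        using powr_less_mono2_neg[of "r - 1" x 1] by simp
      then show "\<exists>y. DERIV h x :> y \<and> 0 < y" using der[of x] x t r
        by (intro exI[of _ "r * x powr (r - 1) - r"]) auto
    qed
    then show ?thesis unfolding h_def by simp
  next
    case False
    with t have T: "1 < t" by simp
    have "h t < h 1"
    proof (rule DERIV_neg_imp_decreasing_open[OF T _ cont])
      fix x assume x: "1 < x" "x < t"
      have "x powr (r - 1) < 1" using x t r
        using powr_less_mono2_neg[of "r - 1" 1 x] by simp
      then show "\<exists>y. DERIV h x :> y \<and> y < 0" using der[of x] x t r
        by (intro exI[of _ "r * x powr (r - 1) - r"]) auto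
    qed simp
    then show ?thesis unfolding h_def by simp
  qed
qed

lemma young_strict:
  fixes p q a b :: real
  assumes p: "1 < p" and q: "q = p / (p - 1)" and a: "0 \<le> a" and b: "0 \<le> b"
    and ne: "a powr p \<noteq> b powr q"
  shows "a * b < a powr p / p + b powr q / q"
proof -
  have q1: "1 < q" unfolding q using p by (simp add: less_divide_eq)
  have pq: "1/p + 1/q = 1" unfolding q using p by (simp add: field_simps)
  show ?thesis
  proof (cases "a = 0 \<or> b = 0")
    case True
    then show ?thesis using ne p q1 a b by auto
  next
    case False
    with a b have a0: "0 < a" and b0: "0 < b" by auto
    define t where "t = a powr p / b powr q"
    have t0: "0 < t" using a0 b0 by (simp add: t_def)
    have t1: "t \<noteq> 1" using ne b0 by (simp add: t_def)
    have "t powr (1/p) < (1/p) * t + (1 - 1/p)"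
      by (rule strict_pow_ineq) (use p t0 t1 in auto)
    moreover have "t powr (1/p) = a / b powr (q/p)"
      using a0 b0 p by (simp add: t_def powr_divide powr_powr)
    moreover have "q / p = q - 1" using p q by (simp add: field_simps)
    moreover have "1 - 1/p = 1/q" using pq by simp
    ultimately have "a / b powr (q - 1) < (1/p) * t + 1/q" by simp
    then have "b powr q * (a / b powr (q - 1)) < b powr q * ((1/p) * t + 1/q)"
      using b0 by (intro mult_strict_left_mono) auto
    moreover have "b powr q * (a / b powr (q - 1)) = a * b"
      using b0 by (simp add: powr_diff field_simps)
    moreover have "b powr q * ((1/p) * t + 1/q) = a powr p / p + b powr q / q"
      using b0 by (simp add: t_def field_simps)
    ultimately show ?thesis by simp
  qed
qed

lemma holder_char:
  fixes w y :: "'i::finite \<Rightarrow> real" and p q c \<alpha> :: real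
  assumes p: "1 < p" and q: "q = p / (p - 1)" and w: "\<And>i. 0 \<le> w i"
    and c: "c = (\<Sum>i\<in>UNIV. w i powr q) powr (1/q)" and c0: "0 < c" and al: "0 < \<alpha>"
    and y: "(\<Sum>i\<in>UNIV. \<bar>y i\<bar> powr p) powr (1/p) \<le> \<alpha>"
  shows "(\<Sum>i\<in>UNIV. w i * y i) \<le> \<alpha> * c"
    and "(\<Sum>i\<in>UNIV. w i * y i) = \<alpha> * c \<Longrightarrow> y = (\<lambda>i. \<alpha> * (w i / c) powr (q - 1))"
proof -
  have q1: "1 < q" unfolding q using p by (simp add: less_divide_eq)
  have pq: "1/p + 1/q = 1" unfolding q using p by (simp add: field_simps)
  have qp: "q / p = q - 1" unfolding q using p by (simp add: field_simps)
  define a where "a i = \<bar>y i\<bar> / \<alpha>" for i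
  define b where "b i = w i / c" for i
  have a0: "0 \<le> a i" for i using al by (simp add: a_def)
  have b0: "0 \<le> b i" for i using c0 w by (simp add: b_def)
  define Sy where "Sy = (\<Sum>i\<in>UNIV. \<bar>y i\<bar> powr p)"
  have Sy0: "0 \<le> Sy" unfolding Sy_def by (intro sum_nonneg) auto
  have "(Sy powr (1/p)) powr p \<le> \<alpha> powr p"
    using y p by (intro powr_mono2) (auto simp: Sy_def)
  then have Sy_le: "Sy \<le> \<alpha> powr p" using p Sy0 by (simp add: powr_powr)
  have Sa: "(\<Sum>i\<in>UNIV. a i powr p) = Sy / \<alpha> powr p"
    unfolding a_def Sy_def using al by (simp add: powr_divide sum_divide_distrib)
  have Sa1: "(\<Sum>i\<in>UNIV. a i powr p) \<le> 1" using Sa Sy_le al by simp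
  define Sw where "Sw = (\<Sum>i\<in>UNIV. w i powr q)"
  have Sw0: "0 \<le> Sw" unfolding Sw_def by (intro sum_nonneg) auto
  have cq: "c powr q = Sw" unfolding c Sw_def[symmetric] using q1 Sw0 by (simp add: powr_powr)
  have Sb: "(\<Sum>i\<in>UNIV. b i powr q) = 1"
    unfolding b_def using c0 w cq[symmetric] by (simp add: powr_divide flip: sum_divide_distrib Sw_def)
  have key: "w i * \<bar>y i\<bar> = \<alpha> * c * (a i * b i)" for i
    using al c0 by (simp add: a_def b_def)
  have Y: "a i * b i \<le> a i powr p / p + b i powr q / q" for i
    using Youngs_inequality[OF p q1 pq a0 b0] .
  define D1 where "D1 = (\<Sum>i\<in>UNIV. w i * \<bar>y i\<bar> - w i * y i)"
  define D2 where "D2 = (\<Sum>i\<in>UNIV. a i powr p / p + b i powr q / q - a i * b i)"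
  have t1: "0 \<le> w i * \<bar>y i\<bar> - w i * y i" for i
    using w[of i] by (simp add: mult_left_mono)
  have D10: "0 \<le> D1" unfolding D1_def using t1 by (intro sum_nonneg) auto
  have D20: "0 \<le> D2" unfolding D2_def using Y by (intro sum_nonneg) (auto simp: algebra_simps)
  have eq: "(\<Sum>i\<in>UNIV. w i * y i) = \<alpha> * c * ((\<Sum>i\<in>UNIV. a i powr p) / p + 1 / q) - D1 - \<alpha> * c * D2"
  proof -
    have "(\<Sum>i\<in>UNIV. w i * y i) = (\<Sum>i\<in>UNIV. w i * \<bar>y i\<bar>) - D1"
      unfolding D1_def by (simp add: sum_subtractf)
    also have "(\<Sum>i\<in>UNIV. w i * \<bar>y i\<bar>) = \<alpha> * c * (\<Sum>i\<in>UNIV. a i * b i)"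
      by (simp add: key sum_distrib_left)
    also have "(\<Sum>i\<in>UNIV. a i * b i) = (\<Sum>i\<in>UNIV. a i powr p) / p + (\<Sum>i\<in>UNIV. b i powr q) / q - D2"
      unfolding D2_def by (simp add: sum_subtractf sum.distrib sum_divide_distrib)
    finally show ?thesis using Sb by (simp add: algebra_simps)
  qed
  have ac: "0 < \<alpha> * c" using al c0 by simp
  have rest: "\<alpha> * c * ((\<Sum>i\<in>UNIV. a i powr p) / p + 1 / q) \<le> \<alpha> * c"
  proof -
    have "(\<Sum>i\<in>UNIV. a i powr p) / p + 1 / q \<le> 1 / p + 1/q"
      using Sa1 p by (simp add: divide_right_mono)
    then show ?thesis using pq ac by (simp add: mult_left_le)
  qed
  have "0 \<le> \<alpha> * c * D2" using ac D20 by simp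
  then show "(\<Sum>i\<in>UNIV. w i * y i) \<le> \<alpha> * c" using eq rest D10 by linarith
  assume E: "(\<Sum>i\<in>UNIV. w i * y i) = \<alpha> * c"
  have "\<alpha> * c * D2 = 0" "D1 = 0" using eq rest D10 D20 ac E \<open>0 \<le> \<alpha> * c * D2\<close> by linarith+
  then have "D2 = 0" using al c0 by simp
  then have E2: "a i powr p / p + b i powr q / q - a i * b i = 0" for i
    unfolding D2_def using Y by (subst (asm) sum_nonneg_eq_0_iff) (auto simp: algebra_simps)
  have E1: "w i * \<bar>y i\<bar> - w i * y i = 0" for i
    using \<open>D1 = 0\<close> unfolding D1_def using t1 by (subst (asm) sum_nonneg_eq_0_iff) auto
  show "y = (\<lambda>i. \<alpha> * (w i / c) powr (q - 1))"
  proof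
    fix i
    have "a i powr p = b i powr q"
      using young_strict[OF p q a0 b0, of i i] E2[of i] by force
    then have "(a i powr p) powr (1/p) = (b i powr q) powr (1/p)" by simp
    then have ab: "a i = b i powr (q - 1)"
      using p a0[of i] qp by (simp add: powr_powr)
    show "y i = \<alpha> * (w i / c) powr (q - 1)"
    proof (cases "w i = 0")
      case True
      then have "b i = 0" by (simp add: b_def)
      then have "a i = 0" using ab by simp
      then have "y i = 0" using al by (simp add: a_def)
      then show ?thesis using True by simp
    next
      case False
      then have "w i > 0" using w[of i] by simp
      then have "y i = \<bar>y i\<bar>" using E1[of i] by (simp add: abs_if split: if_splits)
      also have "\<dots> = \<alpha> * a i" using al by (simp add: a_def)
      finally show ?thesis using ab by (simp add: b_def)
    qed
  qed
qed

lemma holder_attain: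
  fixes w :: "'i::finite \<Rightarrow> real" and p q c \<alpha> :: real
  assumes p: "1 < p" and q: "q = p / (p - 1)" and w: "\<And>i. 0 \<le> w i"
    and c: "c = (\<Sum>i\<in>UNIV. w i powr q) powr (1/q)" and c0: "0 < c" and al: "0 < \<alpha>"
  shows "(\<Sum>i\<in>UNIV. \<bar>\<alpha> * (w i / c) powr (q - 1)\<bar> powr p) powr (1/p) = \<alpha>"
    and "(\<Sum>i\<in>UNIV. w i * (\<alpha> * (w i / c) powr (q - 1))) = \<alpha> * c"
proof -
  have q1: "1 < q" unfolding q using p by (simp add: less_divide_eq)
  have qp: "(q - 1) * p = q" unfolding q using p by (simp add: field_simps)
  define Sw where "Sw = (\<Sum>i\<in>UNIV. w i powr q)"
  have Sw0: "0 \<le> Sw" unfolding Sw_def by (intro sum_nonneg) auto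
  have cq: "c powr q = Sw" unfolding c Sw_def[symmetric] using q1 Sw0 by (simp add: powr_powr)
  have Sb: "(\<Sum>i\<in>UNIV. (w i / c) powr q) = 1"
    using c0 w cq[symmetric] by (simp add: powr_divide flip: sum_divide_distrib Sw_def)
  have "(\<Sum>i\<in>UNIV. \<bar>\<alpha> * (w i / c) powr (q - 1)\<bar> powr p)
      = (\<Sum>i\<in>UNIV. \<alpha> powr p * (w i / c) powr q)"
  proof (rule sum.cong)
    fix i
    have "\<bar>\<alpha> * (w i / c) powr (q - 1)\<bar> = \<alpha> * (w i / c) powr (q - 1)" using al by simp
    then show "\<bar>\<alpha> * (w i / c) powr (q - 1)\<bar> powr p = \<alpha> powr p * (w i / c) powr q"
      using al c0 w[of i] by (simp add: powr_mult powr_powr qp)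
  qed simp
  also have "\<dots> = \<alpha> powr p" using Sb by (simp flip: sum_distrib_left)
  finally show "(\<Sum>i\<in>UNIV. \<bar>\<alpha> * (w i / c) powr (q - 1)\<bar> powr p) powr (1/p) = \<alpha>"
    using al p by (simp add: powr_powr)
  have "(\<Sum>i\<in>UNIV. w i * (\<alpha> * (w i / c) powr (q - 1))) = (\<Sum>i\<in>UNIV. \<alpha> * c * (w i / c) powr q)"
  proof (rule sum.cong)
    fix i
    have "w i * (w i / c) powr (q - 1) = c * ((w i / c) * (w i / c) powr (q - 1))" using c0 by simp
    also have "(w i / c) * (w i / c) powr (q - 1) = (w i / c) powr q"
    proof (cases "w i = 0")
      case True then show ?thesis using q1 by simp
    next
      case False then have "w i / c > 0" using w[of i] c0 by simp
      then have "(w i / c) powr (1 + (q - 1)) = (w i / c) powr 1 * (w i / c) powr (q - 1)"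
        by (simp only: powr_add)
      then show ?thesis using \<open>w i / c > 0\<close> w[of i] c0 by simp
    qed
    finally show "w i * (\<alpha> * (w i / c) powr (q - 1)) = \<alpha> * c * (w i / c) powr q" by simp
  qed simp
  also have "\<dots> = \<alpha> * c" using Sb by (simp flip: sum_distrib_left)
  finally show "(\<Sum>i\<in>UNIV. w i * (\<alpha> * (w i / c) powr (q - 1))) = \<alpha> * c" .
qed


lemma Ppi_nonneg: "stochastic_kernel P \<Longrightarrow> policy pol \<Longrightarrow> 0 \<le> Ppi P pol $ s $ t"
  unfolding Ppi_def stochastic_kernel_def policy_def by (auto intro!: sum_nonneg)

lemma Ppi_rowsum: "stochastic_kernel P \<Longrightarrow> policy pol \<Longrightarrow> (\<Sum>t\<in>UNIV. Ppi P pol $ s $ t) = 1"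
  unfolding Ppi_def stochastic_kernel_def policy_def
  by (simp add: sum.swap[of _ UNIV UNIV] flip: sum_distrib_left)

lemma M_apply:
  fixes A :: "real^'n::finite^'n"
  shows "((mat 1 - \<gamma> *\<^sub>R A) *v x) $ s = x $ s - \<gamma> * (\<Sum>t\<in>UNIV. A $ s $ t * x $ t)"
proof -
  have "(mat 1 - \<gamma> *\<^sub>R A) *v x = x - \<gamma> *\<^sub>R (A *v x)"
    by (simp add: matrix_vector_mult_diff_rdistrib scaleR_matrix_vector_assoc)
  then show ?thesis by (simp add: matrix_vector_mult_def)
qed

lemma vM_apply:
  fixes A :: "real^'n::finite^'n"
  shows "(x v* (mat 1 - \<gamma> *\<^sub>R A)) $ s = x $ s - \<gamma> * (\<Sum>t\<in>UNIV. x $ t * A $ t $ s)"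
proof -
  have "x v* (mat 1 - \<gamma> *\<^sub>R A) = x - \<gamma> *\<^sub>R (x v* A)"
    by (simp add: vector_matrix_mult_diff_rdistrib vector_scaleR_matrix_ac)
  then show ?thesis by (simp add: vector_matrix_mult_def)
qed


lemma exists_max_fin: "\<exists>s0. \<forall>t. f t \<le> (f s0 :: real)" for f :: "'n::finite \<Rightarrow> real"
proof -
  have "Max (range f) \<in> range f" by (rule Max_in) auto
  then obtain s0 where "Max (range f) = f s0" by blast
  moreover have "f t \<le> Max (range f)" for t by (rule Max_ge) auto
  ultimately show ?thesis by metis
qed

context
  fixes P :: "'s::finite \<Rightarrow> 'a::finite \<Rightarrow> 's \<Rightarrow> real" and pol :: "'s \<Rightarrow> 'a \<Rightarrow> real" and \<gamma> :: real
  assumes K: "stochastic_kernel P" and pol: "policy pol" and g0: "0 \<le> \<gamma>" and g1: "\<gamma> < 1"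
begin

lemma M_inj: "inj ((*v) (mat 1 - \<gamma> *\<^sub>R Ppi P pol))"
proof -
  let ?A = "Ppi P pol"
  have "x = 0" if x: "(mat 1 - \<gamma> *\<^sub>R ?A) *v x = 0" for x
  proof -
    obtain s0 where s0: "\<forall>t. \<bar>x $ t\<bar> \<le> \<bar>x $ s0\<bar>" using exists_max_fin[of "\<lambda>t. \<bar>x $ t\<bar>"] by auto
    have e: "x $ s0 = \<gamma> * (\<Sum>t\<in>UNIV. ?A $ s0 $ t * x $ t)"
      using arg_cong[OF x, of "\<lambda>v. v $ s0"] by (simp add: M_apply)
    have "\<bar>\<Sum>t\<in>UNIV. ?A $ s0 $ t * x $ t\<bar> \<le> (\<Sum>t\<in>UNIV. ?A $ s0 $ t * \<bar>x $ s0\<bar>)"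
      by (rule order_trans[OF sum_abs]) (auto intro!: sum_mono mult_left_mono simp: abs_mult Ppi_nonneg[OF K pol] s0)
    also have "\<dots> = \<bar>x $ s0\<bar>" using Ppi_rowsum[OF K pol] by (simp flip: sum_distrib_right)
    finally have le: "\<bar>\<Sum>t\<in>UNIV. ?A $ s0 $ t * x $ t\<bar> \<le> \<bar>x $ s0\<bar>" .
    have "\<bar>x $ s0\<bar> = \<gamma> * \<bar>\<Sum>t\<in>UNIV. ?A $ s0 $ t * x $ t\<bar>" using e g0 by (simp add: abs_mult)
    also have "\<dots> \<le> \<gamma> * \<bar>x $ s0\<bar>" using le g0 by (rule mult_left_mono)
    finally have "(1 - \<gamma>) * \<bar>x $ s0\<bar> \<le> 0" by (simp add: algebra_simps)
    then have "\<bar>x $ s0\<bar> \<le> 0" using g1 by (simp add: mult_le_0_iff)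
    then show ?thesis using s0 by (simp add: vec_eq_iff)
  qed
  then show ?thesis
  proof (intro inj_onI)
    fix x y assume "(mat 1 - \<gamma> *\<^sub>R ?A) *v x = (mat 1 - \<gamma> *\<^sub>R ?A) *v y"
    then have "(mat 1 - \<gamma> *\<^sub>R ?A) *v (x - y) = 0" by (simp add: matrix_vector_mult_diff_distrib)
    moreover assume "\<And>x. (mat 1 - \<gamma> *\<^sub>R ?A) *v x = 0 \<Longrightarrow> x = 0"
    ultimately show "x = y" by force
  qed
qed

lemma M_inv: "matrix_inv (mat 1 - \<gamma> *\<^sub>R Ppi P pol) ** (mat 1 - \<gamma> *\<^sub>R Ppi P pol) = mat 1 \<and>
    (mat 1 - \<gamma> *\<^sub>R Ppi P pol) ** matrix_inv (mat 1 - \<gamma> *\<^sub>R Ppi P pol) = mat 1"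
proof -
  have "invertible (mat 1 - \<gamma> *\<^sub>R Ppi P pol)"
    using M_inj by (simp add: invertible_left_inverse matrix_left_invertible_injective)
  then have "\<exists>A'. (mat 1 - \<gamma> *\<^sub>R Ppi P pol) ** A' = mat 1 \<and> A' ** (mat 1 - \<gamma> *\<^sub>R Ppi P pol) = mat 1"
    unfolding invertible_def .
  from someI_ex[OF this] show ?thesis unfolding matrix_inv_def by blast
qed

lemma N_nonneg: "0 \<le> matrix_inv (mat 1 - \<gamma> *\<^sub>R Ppi P pol) $ t $ s"
proof -
  let ?A = "Ppi P pol" and ?M = "mat 1 - \<gamma> *\<^sub>R Ppi P pol"
  let ?N = "matrix_inv ?M"
  define v :: "real^'s" where "v = (\<chi> i. if i = s then 1 else 0)"
  define x where "x = ?N *v v"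
  have Mx: "?M *v x = v" unfolding x_def using M_inv by (simp add: matrix_vector_mul_assoc)
  obtain s0 where s0: "\<forall>t. - x $ t \<le> - x $ s0" using exists_max_fin[of "\<lambda>t. - x $ t"] by auto
  have e: "x $ s0 = v $ s0 + \<gamma> * (\<Sum>t\<in>UNIV. ?A $ s0 $ t * x $ t)"
    using arg_cong[OF Mx, of "\<lambda>v. v $ s0"] by (simp add: M_apply)
  have "(\<Sum>t\<in>UNIV. ?A $ s0 $ t * x $ s0) \<le> (\<Sum>t\<in>UNIV. ?A $ s0 $ t * x $ t)"
    using s0 by (auto intro!: sum_mono mult_left_mono simp: Ppi_nonneg[OF K pol])
  then have "x $ s0 \<le> (\<Sum>t\<in>UNIV. ?A $ s0 $ t * x $ t)"
    using Ppi_rowsum[OF K pol] by (simp flip: sum_distrib_right)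
  then have "\<gamma> * x $ s0 \<le> \<gamma> * (\<Sum>t\<in>UNIV. ?A $ s0 $ t * x $ t)" using g0 by (rule mult_left_mono)
  moreover have "0 \<le> v $ s0" by (simp add: v_def)
  ultimately have "(1 - \<gamma>) * x $ s0 \<ge> 0" using e by (simp add: algebra_simps)
  then have "x $ s0 \<ge> 0" using g1 by (simp add: zero_le_mult_iff)
  then have "x $ t \<ge> 0" using s0[rule_format, of t] by linarith
  moreover have "x $ t = ?N $ t $ s" unfolding x_def v_def
    by (simp add: matrix_vector_mult_def if_distrib cong: if_cong)
  ultimately show ?thesis by simp
qed

lemma dstate_ge:
  assumes mu: "\<forall>s. \<mu> s > 0"
  shows "dstate P \<gamma> \<mu> pol $ s \<ge> \<mu> s"
proof -
  let ?A = "Ppi P pol" and ?M = "mat 1 - \<gamma> *\<^sub>R Ppi P pol"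
  let ?d = "dstate P \<gamma> \<mu> pol"
  have dn: "0 \<le> ?d $ t" for t
    unfolding dstate_def using mu by (auto simp: vector_matrix_mult_def intro!: sum_nonneg N_nonneg mult_nonneg_nonneg less_imp_le[OF mu[rule_format]])
  have "?d v* ?M = (\<chi> s. \<mu> s)" unfolding dstate_def using M_inv by (simp add: vector_matrix_mul_assoc)
  then have e: "?d $ s - \<gamma> * (\<Sum>t\<in>UNIV. ?d $ t * ?A $ t $ s) = \<mu> s"
    using vM_apply[of ?d \<gamma> ?A s] by simp
  have "0 \<le> \<gamma> * (\<Sum>t\<in>UNIV. ?d $ t * ?A $ t $ s)"
    using g0 dn by (auto intro!: sum_nonneg mult_nonneg_nonneg Ppi_nonneg[OF K pol])
  then show ?thesis using e by linarith
qed

end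


theorem corollary2:
  fixes P :: "'s::finite \<Rightarrow> 'a::finite \<Rightarrow> 's \<Rightarrow> real"
    and \<mu> :: "'s \<Rightarrow> real" and \<gamma> p q \<alpha> :: real
    and R0 pol :: "'s \<Rightarrow> 'a \<Rightarrow> real" and s :: 's and a :: 'a
  assumes "stochastic_kernel P"
    and "0 \<le> \<gamma>" and "\<gamma> < 1"
    and "\<forall>s. \<mu> s > 0" and "(\<Sum>s\<in>UNIV. \<mu> s) = 1"
    and "1 < p" and "q = p / (p - 1)" and "\<alpha> > 0"
    and "policy pol"
  shows "Qfun P \<gamma> pol (Rworst P \<gamma> \<mu> pol p R0 \<alpha>) s a =
           R0 s a + \<gamma> * (\<Sum>s'\<in>UNIV. P s a s' * vfun P \<gamma> pol (Rworst P \<gamma> \<mu> pol p R0 \<alpha>) $ s')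
           - \<alpha> * (docc P \<gamma> \<mu> pol s a / lpnorm q (docc P \<gamma> \<mu> pol)) powr (q - 1)"
proof -
  note K = assms(1) and g0 = assms(2) and g1 = assms(3) and mu = assms(4)
    and p = assms(6) and q = assms(7) and al = assms(8) and pol = assms(9)
  define d where "d = docc P \<gamma> \<mu> pol"
  define c where "c = lpnorm q d"
  have q1: "1 < q" unfolding q using p by (simp add: less_divide_eq)
  have dn: "0 \<le> d s a" for s a
    unfolding d_def docc_def using dstate_ge[OF K pol g0 g1 mu, of s] mu[rule_format, of s] pol
    by (auto simp: policy_def intro!: mult_nonneg_nonneg)
  obtain s1 :: 's where True by simp
  obtain a1 where pa1: "pol s1 a1 > 0"
  proof (rule ccontr)
    assume "\<not> thesis"
    then have "\<forall>a. pol s1 a \<le> 0" using that by (meson not_le)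
    then have "(\<Sum>a\<in>UNIV. pol s1 a) \<le> 0" by (simp add: sum_nonpos)
    then show False using pol by (simp add: policy_def)
  qed
  have d1: "d s1 a1 > 0"
    unfolding d_def docc_def using dstate_ge[OF K pol g0 g1 mu, of s1] mu[rule_format, of s1] pa1 by simp
  define w :: "'s \<times> 'a \<Rightarrow> real" where "w = (\<lambda>(s,a). d s a)"
  have wn: "0 \<le> w i" for i by (auto simp: w_def dn split: prod.splits)
  have cw: "c = (\<Sum>i\<in>UNIV. w i powr q) powr (1/q)"
    unfolding c_def lpnorm_def w_def by (simp add: case_prod_beta abs_of_nonneg dn)
  have "0 < w (s1, a1) powr q" using d1 by (simp add: w_def)
  also have "\<dots> \<le> (\<Sum>i\<in>UNIV. w i powr q)" by (rule member_le_sum) auto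
  finally have c0: "0 < c" unfolding cw by simp
  define Rs where "Rs = (\<lambda>s a. R0 s a - \<alpha> * (d s a / c) powr (q - 1))"
  define Y :: "('s \<Rightarrow> 'a \<Rightarrow> real) \<Rightarrow> 's \<times> 'a \<Rightarrow> real" where "Y R = (\<lambda>(s,a). R0 s a - R s a)" for R
  have ret_eq: "ret P \<gamma> \<mu> pol R = (\<Sum>i\<in>UNIV. w i * case_prod R0 i) - (\<Sum>i\<in>UNIV. w i * Y R i)" for R
    unfolding ret_def Y_def w_def d_def by (simp add: case_prod_beta right_diff_distrib sum_subtractf)
  have ball_iff: "R \<in> Rball p R0 \<alpha> \<longleftrightarrow> (\<Sum>i\<in>UNIV. \<bar>Y R i\<bar> powr p) powr (1/p) \<le> \<alpha>" for R
    unfolding Rball_def lpnorm_def Y_def by (simp add: case_prod_beta abs_minus_commute)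
  have YRs: "Y Rs = (\<lambda>i. \<alpha> * (w i / c) powr (q - 1))"
    by (auto simp: Y_def Rs_def w_def)
  note HA = holder_attain[OF p q wn cw c0 al]
  note HC = holder_char[OF p q wn cw c0 al]
  have Rs_in: "Rs \<in> Rball p R0 \<alpha>" unfolding ball_iff YRs using HA(1) by simp
  have ret_Rs: "ret P \<gamma> \<mu> pol Rs = (\<Sum>i\<in>UNIV. w i * case_prod R0 i) - \<alpha> * c"
    unfolding ret_eq YRs HA(2) ..
  have Rw: "Rworst P \<gamma> \<mu> pol p R0 \<alpha> = Rs"
    unfolding Rworst_def
  proof (rule the_equality)
    show "Rs \<in> Rball p R0 \<alpha> \<and> (\<forall>R'\<in>Rball p R0 \<alpha>. ret P \<gamma> \<mu> pol Rs \<le> ret P \<gamma> \<mu> pol R')"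
    proof (intro conjI ballI Rs_in)
      fix R' assume "R' \<in> Rball p R0 \<alpha>"
      then have "(\<Sum>i\<in>UNIV. w i * Y R' i) \<le> \<alpha> * c" using HC(1) ball_iff by blast
      then show "ret P \<gamma> \<mu> pol Rs \<le> ret P \<gamma> \<mu> pol R'" using ret_Rs ret_eq[of R'] by simp
    qed
  next
    fix R assume R: "R \<in> Rball p R0 \<alpha> \<and> (\<forall>R'\<in>Rball p R0 \<alpha>. ret P \<gamma> \<mu> pol R \<le> ret P \<gamma> \<mu> pol R')"
    then have yb: "(\<Sum>i\<in>UNIV. \<bar>Y R i\<bar> powr p) powr (1/p) \<le> \<alpha>" using ball_iff by blast
    have "ret P \<gamma> \<mu> pol R \<le> ret P \<gamma> \<mu> pol Rs" using R Rs_in by blast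
    then have "(\<Sum>i\<in>UNIV. w i * Y R i) \<ge> \<alpha> * c" using ret_Rs ret_eq[of R] by simp
    then have "(\<Sum>i\<in>UNIV. w i * Y R i) = \<alpha> * c" using HC(1)[OF yb] by linarith
    then have "Y R = Y Rs" using HC(2)[OF yb] YRs by simp
    then show "R = Rs"
    proof (intro ext)
      fix s a assume "Y R = Y Rs"
      then have "Y R (s, a) = Y Rs (s, a)" by simp
      then show "R s a = Rs s a" by (simp add: Y_def)
    qed
  qed
  show ?thesis unfolding Rw Qfun_def by (simp add: Rs_def d_def c_def)
qed

end
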